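(* Let $0\le s\le w\le n$ and let $T$ be a family of distinct $w$-subsets of $[n]$ such that every two members of $T$ intersect in at least $s$ elements, and $T$ has the maximum possible cardinality among all such families. For $q\ge 2$ let $A_q$ be the set of all $|T|(q-1)^w$ words of $\mathbb{Z}_q^n$ whose support belongs to $T$. Then: (1) $A_2$ is a maximum anticode of diameter $2w-2s$ in $J_2(n,w)$; (2) for all sufficiently large $q$, $A_q$ is a maximum anticode of diameter $2w-s$ in $J_q(n,w)$; (3) if $C_q\subseteq J_q(n,w)$ is a code with minimum distance at least $2w-s+1$ and $|C_q|=|J_q(n,w)|/|A_q|$, then the binary code $C_2$ obtained from $C_q$ by replacing every nonzero symbol in every codeword by $1$ satisfies $|C_2|=|J_2(n,w)|/|A_2|$ and has minimum distance at least $2w-2s+2$ (so $C_2$ is a diameter perfect code in $J_2(n,w)$).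
   Context: $\mathbb{Z}_q=\{0,1,\dots,q-1\}$ is used merely as an alphabet; $[n]=\{1,\dots,n\}$. For $x\in\mathbb{Z}_q^n$, $\mathrm{supp}(x)=\{i: x_i\ne0\}$, $\mathrm{wt}(x)=|\mathrm{supp}(x)|$; $d(x,y)$ is the Hamming distance. $J_q(n,w)$ is the set of weight-$w$ words in $\mathbb{Z}_q^n$ with the Hamming metric. An anticode of diameter $D$ is a nonempty subset with all pairwise distances at most $D$; it is maximum if it has largest cardinality among such. A code of distance $d$ in $J_q(n,w)$ is a subset with at least two elements and pairwise distances at least $d$; it is diameter perfect if $|C|\cdot|A|=|J_q(n,w)|$ for some anticode $A$ of diameter less than $d$. *)

theory Defs
  imports Complex_Main "HOL-Library.FuncSet"
begin

text \<open>Words of Z_q^n: functions on the index set [n] = {1..n} with values in {0..q-1}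
  (extensional: undefined outside [n]).\<close>
definition words :: "nat \<Rightarrow> nat \<Rightarrow> (nat \<Rightarrow> nat) set" where
  "words q n = ({1..n} \<rightarrow>\<^sub>E {..<q})"

definition supp :: "nat \<Rightarrow> (nat \<Rightarrow> nat) \<Rightarrow> nat set" where
  "supp n x = {i \<in> {1..n}. x i \<noteq> 0}"

definition wt :: "nat \<Rightarrow> (nat \<Rightarrow> nat) \<Rightarrow> nat" where
  "wt n x = card (supp n x)"

definition hdist :: "nat \<Rightarrow> (nat \<Rightarrow> nat) \<Rightarrow> (nat \<Rightarrow> nat) \<Rightarrow> nat" where
  "hdist n x y = card {i \<in> {1..n}. x i \<noteq> y i}"

definition J :: "nat \<Rightarrow> nat \<Rightarrow> nat \<Rightarrow> (nat \<Rightarrow> nat) set" where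
  "J q n w = {x \<in> words q n. wt n x = w}"

definition anticode :: "nat \<Rightarrow> nat \<Rightarrow> nat \<Rightarrow> nat \<Rightarrow> (nat \<Rightarrow> nat) set \<Rightarrow> bool" where
  "anticode q n w D A \<longleftrightarrow> A \<subseteq> J q n w \<and> A \<noteq> {} \<and> (\<forall>x\<in>A. \<forall>y\<in>A. hdist n x y \<le> D)"

definition max_anticode :: "nat \<Rightarrow> nat \<Rightarrow> nat \<Rightarrow> nat \<Rightarrow> (nat \<Rightarrow> nat) set \<Rightarrow> bool" where
  "max_anticode q n w D A \<longleftrightarrow> anticode q n w D A \<and>
     (\<forall>B. anticode q n w D B \<longrightarrow> card B \<le> card A)"

definition code :: "nat \<Rightarrow> nat \<Rightarrow> nat \<Rightarrow> nat \<Rightarrow> (nat \<Rightarrow> nat) set \<Rightarrow> bool" where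
  "code q n w d C \<longleftrightarrow> C \<subseteq> J q n w \<and> 2 \<le> card C \<and>
     (\<forall>x\<in>C. \<forall>y\<in>C. x \<noteq> y \<longrightarrow> d \<le> hdist n x y)"

definition diameter_perfect :: "nat \<Rightarrow> nat \<Rightarrow> nat \<Rightarrow> nat \<Rightarrow> (nat \<Rightarrow> nat) set \<Rightarrow> bool" where
  "diameter_perfect q n w d C \<longleftrightarrow> code q n w d C \<and>
     (\<exists>A D. D < d \<and> anticode q n w D A \<and> card C * card A = card (J q n w))"

definition s_intersecting :: "nat \<Rightarrow> nat \<Rightarrow> nat \<Rightarrow> nat set set \<Rightarrow> bool" where
  "s_intersecting n w s T \<longleftrightarrow> (\<forall>S\<in>T. S \<subseteq> {1..n} \<and> card S = w) \<and>
     (\<forall>S1\<in>T. \<forall>S2\<in>T. s \<le> card (S1 \<inter> S2))"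

definition max_s_intersecting :: "nat \<Rightarrow> nat \<Rightarrow> nat \<Rightarrow> nat set set \<Rightarrow> bool" where
  "max_s_intersecting n w s T \<longleftrightarrow> s_intersecting n w s T \<and>
     (\<forall>T'. s_intersecting n w s T' \<longrightarrow> card T' \<le> card T)"

definition Aq :: "nat \<Rightarrow> nat \<Rightarrow> nat set set \<Rightarrow> (nat \<Rightarrow> nat) set" where
  "Aq q n T = {x \<in> words q n. supp n x \<in> T}"

definition binarize :: "nat \<Rightarrow> (nat \<Rightarrow> nat) \<Rightarrow> (nat \<Rightarrow> nat)" where
  "binarize n x = restrict (\<lambda>i. if x i = 0 then 0 else 1) {1..n}"

end

theory Submission
  imports Defs
begin


definition W :: "nat \<Rightarrow> nat \<Rightarrow> nat set \<Rightarrow> (nat \<Rightarrow> nat) set" where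
  "W q n S = {x \<in> words q n. supp n x = S}"

lemma finite_words[simp]: "finite (words q n)"
  by (simp add: words_def finite_PiE)

lemma supp_sub: "supp n x \<subseteq> {1..n}"
  by (auto simp: supp_def)

lemma finite_supp[simp]: "finite (supp n x)"
  using supp_sub finite_subset by blast

lemma W_eq: "S \<subseteq> {1..n} \<Longrightarrow> 0 < q \<Longrightarrow>
  W q n S = PiE {1..n} (\<lambda>i. if i \<in> S then {1..<q} else {0})"
proof (rule set_eqI)
  fix x assume S: "S \<subseteq> {1..n}" and q: "0 < q"
  show "x \<in> W q n S \<longleftrightarrow> x \<in> PiE {1..n} (\<lambda>i. if i \<in> S then {1..<q} else {0})"
  proof
    assume "x \<in> W q n S"
    then have x: "x \<in> PiE {1..n} (\<lambda>i. {..<q})" and sx: "{i \<in> {1..n}. x i \<noteq> 0} = S"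
      unfolding W_def words_def supp_def by auto
    have "\<forall>i\<in>{1..n}. x i \<in> (if i \<in> S then {1..<q} else {0})"
    proof
      fix i assume i: "i \<in> {1..n}"
      have "x i < q" using x i by (auto simp: PiE_iff)
      moreover have "i \<in> S \<longleftrightarrow> x i \<noteq> 0" using sx i by blast
      ultimately show "x i \<in> (if i \<in> S then {1..<q} else {0})" by auto
    qed
    then show "x \<in> PiE {1..n} (\<lambda>i. if i \<in> S then {1..<q} else {0})"
      using x by (simp add: PiE_iff)
  next
    assume x: "x \<in> PiE {1..n} (\<lambda>i. if i \<in> S then {1..<q} else {0})"
    have a: "\<forall>i\<in>{1..n}. x i \<in> (if i \<in> S then {1..<q} else {0})" using x by (simp add: PiE_iff)
    have b: "\<forall>i\<in>{1..n}. x i < q \<and> (x i \<noteq> 0 \<longleftrightarrow> i \<in> S)"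
    proof
      fix i assume i: "i \<in> {1..n}"
      have "x i \<in> (if i \<in> S then {1..<q} else {0})" using a i by blast
      then show "x i < q \<and> (x i \<noteq> 0 \<longleftrightarrow> i \<in> S)"
        using q by (cases "i \<in> S") auto
    qed
    have "x \<in> PiE {1..n} (\<lambda>i. {..<q})" using x b by (simp add: PiE_iff)
    moreover have "{i \<in> {1..n}. x i \<noteq> 0} = S" using b S by blast
    ultimately show "x \<in> W q n S" unfolding W_def words_def supp_def by simp
  qed
qed

lemma prod_if_const: "finite A \<Longrightarrow> (\<Prod>i\<in>A. (if i \<in> S then c else 1::nat)) = c ^ card (A \<inter> S)"
  by (simp add: prod.If_cases Int_def)

lemma card_W: "S \<subseteq> {1..n} \<Longrightarrow> 0 < q \<Longrightarrow> card (W q n S) = (q-1) ^ card S"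
proof -
  assume S: "S \<subseteq> {1..n}" and q: "0 < q"
  have "card (W q n S) = (\<Prod>i\<in>{1..n}. card (if i \<in> S then {1..<q} else {0::nat}))"
    by (simp add: W_eq[OF S q] card_PiE)
  also have "\<dots> = (\<Prod>i\<in>{1..n}. (if i \<in> S then q-1 else 1))"
    by (rule prod.cong) auto
  also have "\<dots> = (q-1) ^ card ({1..n} \<inter> S)" by (rule prod_if_const) simp
  also have "{1..n} \<inter> S = S" using S by blast
  finally show ?thesis .
qed

lemma finite_W[simp]: "finite (W q n S)" unfolding W_def by simp

lemma hdist_le_union: "hdist n x y \<le> card (supp n x \<union> supp n y)"
  unfolding hdist_def
  by (rule card_mono) (auto simp: supp_def)

lemma hdist_eq_union: "\<forall>i\<in>supp n x \<inter> supp n y. x i \<noteq> y i \<Longrightarrow>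
   hdist n x y = card (supp n x \<union> supp n y)"
  unfolding hdist_def
  by (rule arg_cong[where f=card]) (auto simp: supp_def)

lemma words2_vals: "x \<in> words 2 n \<Longrightarrow> i \<in> {1..n} \<Longrightarrow> x i = 0 \<or> x i = 1"
  unfolding words_def by (auto simp: PiE_iff less_2_cases_iff)

lemma hdist_binary: "x \<in> words 2 n \<Longrightarrow> y \<in> words 2 n \<Longrightarrow>
   hdist n x y = card (supp n x \<union> supp n y) - card (supp n x \<inter> supp n y)"
proof -
  assume x: "x \<in> words 2 n" and y: "y \<in> words 2 n"
  have "{i \<in> {1..n}. x i \<noteq> y i} = (supp n x \<union> supp n y) - (supp n x \<inter> supp n y)"
  proof (rule set_eqI)
    fix i show "i \<in> {i \<in> {1..n}. x i \<noteq> y i} \<longleftrightarrow> i \<in> (supp n x \<union> supp n y) - (supp n x \<inter> supp n y)"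
    proof (cases "i \<in> {1..n}")
      case True
      then show ?thesis using words2_vals[OF x True] words2_vals[OF y True]
        unfolding supp_def by auto
    next
      case False then show ?thesis unfolding supp_def by auto
    qed
  qed
  then show ?thesis unfolding hdist_def
    using card_Diff_subset[of "supp n x \<inter> supp n y" "supp n x \<union> supp n y"] by auto
qed

lemma binary_inj: assumes x: "x \<in> words 2 n" and y: "y \<in> words 2 n" and s: "supp n x = supp n y"
  shows "x = y"
proof (rule ext)
  fix i
  show "x i = y i"
  proof (cases "i \<in> {1..n}")
    case True
    have "i \<in> supp n x \<longleftrightarrow> i \<in> supp n y" using s by simp
    with True have "(x i \<noteq> 0) = (y i \<noteq> 0)" by (simp add: supp_def)
    moreover have "x i = 0 \<or> x i = 1" by (rule words2_vals[OF x True])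
    moreover have "y i = 0 \<or> y i = 1" by (rule words2_vals[OF y True])
    ultimately show ?thesis by linarith
  next
    case False
    have "x i = undefined" using x False unfolding words_def by (rule PiE_arb)
    moreover have "y i = undefined" using y False unfolding words_def by (rule PiE_arb)
    ultimately show ?thesis by simp
  qed
qed

lemma binarize_words: "binarize n x \<in> words 2 n"
  unfolding binarize_def words_def by (simp add: restrict_PiE_iff)

lemma supp_binarize: "supp n (binarize n x) = supp n x"
  unfolding binarize_def supp_def by auto

lemma W_disj: "S1 \<noteq> S2 \<Longrightarrow> W q n S1 \<inter> W q n S2 = {}"
  unfolding W_def by auto

lemma Aq_UN: "Aq q n T = (\<Union>S\<in>T. W q n S)"
  unfolding Aq_def W_def by auto

definition WS :: "nat \<Rightarrow> nat \<Rightarrow> nat set set" where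
  "WS n w = {S. S \<subseteq> {1..n} \<and> card S = w}"

lemma finite_WS[simp]: "finite (WS n w)"
proof -
  have "WS n w \<subseteq> Pow {1..n}" unfolding WS_def by auto
  then show ?thesis using finite_subset by blast
qed

lemma J_UN: "J q n w = (\<Union>S\<in>WS n w. W q n S)"
  unfolding J_def W_def WS_def wt_def using supp_sub by auto

lemma card_UN_W: assumes "finite F" "\<forall>S\<in>F. S \<subseteq> {1..n} \<and> card S = w" "0 < q"
  shows "card (\<Union>S\<in>F. W q n S) = card F * (q-1)^w"
proof -
  have "card (\<Union>S\<in>F. W q n S) = (\<Sum>S\<in>F. card (W q n S))"
    by (rule card_UN_disjoint) (use assms W_disj in auto)
  also have "\<dots> = (\<Sum>S\<in>F. (q-1)^w)"
    by (rule sum.cong) (use assms card_W in auto)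
  finally show ?thesis by simp
qed

lemma card_Aq: "finite T \<Longrightarrow> s_intersecting n w s T \<Longrightarrow> 0 < q \<Longrightarrow>
   card (Aq q n T) = card T * (q-1)^w"
  unfolding Aq_UN by (rule card_UN_W) (auto simp: s_intersecting_def)

lemma card_J: "0 < q \<Longrightarrow> card (J q n w) = card (WS n w) * (q-1)^w"
  unfolding J_UN by (rule card_UN_W) (auto simp: WS_def)

lemma card_fix: assumes S: "S \<subseteq> {1..n}" and q: "0 < q" and i: "i \<in> S"
  shows "card {x \<in> W q n S. x i = c} \<le> (q-1)^(card S - 1)"
proof -
  let ?f = "\<lambda>x::nat\<Rightarrow>nat. x(i := 0)"
  have inj: "inj_on ?f {x \<in> W q n S. x i = c}"
  proof (rule inj_onI)
    fix x y assume "x \<in> {x \<in> W q n S. x i = c}" "y \<in> {x \<in> W q n S. x i = c}" "?f x = ?f y"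
    then have xi: "x i = c" and yi: "y i = c" and eq: "x(i := 0) = y(i := 0)" by auto
    show "x = y"
    proof (rule ext)
      fix j show "x j = y j"
      proof (cases "j = i")
        case True then show ?thesis using xi yi by simp
      next
        case False then show ?thesis using fun_cong[OF eq, of j] by simp
      qed
    qed
  qed
  have iin: "i \<in> {1..n}" using S i by blast
  have img: "?f ` {x \<in> W q n S. x i = c} \<subseteq> W q n (S - {i})"
  proof
    fix z assume "z \<in> ?f ` {x \<in> W q n S. x i = c}"
    then obtain x where x: "x \<in> W q n S" and z: "z = x(i := 0)" by auto
    have xw: "x \<in> PiE {1..n} (\<lambda>_. {..<q})" using x unfolding W_def words_def by simp
    have "x(i := 0) \<in> PiE (insert i {1..n}) (\<lambda>_. {..<q})" by (rule PiE_fun_upd) (use q xw in auto)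
    then have "z \<in> words q n" using iin unfolding z words_def by (simp add: insert_absorb)
    moreover have "supp n z = S - {i}"
    proof -
      have "supp n x = S" using x unfolding W_def by simp
      then show ?thesis unfolding z supp_def by auto
    qed
    ultimately show "z \<in> W q n (S - {i})" unfolding W_def by simp
  qed
  have "card {x \<in> W q n S. x i = c} = card (?f ` {x \<in> W q n S. x i = c})"
    using card_image[OF inj] by simp
  also have "\<dots> \<le> card (W q n (S - {i}))" by (rule card_mono[OF finite_W img])
  also have "\<dots> = (q-1)^(card (S - {i}))" by (rule card_W) (use S q in auto)
  also have "card (S - {i}) = card S - 1" using i by simp
  finally show ?thesis .
qed

lemma card_agree: assumes S: "S \<subseteq> {1..n}" and q: "0 < q"
  shows "card {x \<in> W q n S. \<exists>i\<in>S \<inter> R. x i = y i} \<le> card S * (q-1)^(card S - 1)"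
proof -
  have fS: "finite S" using S finite_subset by blast
  have "{x \<in> W q n S. \<exists>i\<in>S \<inter> R. x i = y i} = (\<Union>i\<in>S \<inter> R. {x \<in> W q n S. x i = y i})"
    by auto
  then have "card {x \<in> W q n S. \<exists>i\<in>S \<inter> R. x i = y i} \<le> (\<Sum>i\<in>S \<inter> R. card {x \<in> W q n S. x i = y i})"
    using card_UN_le[of "S \<inter> R" "\<lambda>i. {x \<in> W q n S. x i = y i}"] fS by simp
  also have "\<dots> \<le> (\<Sum>i\<in>S \<inter> R. (q-1)^(card S - 1))"
    by (rule sum_mono) (use card_fix[OF S q] in auto)
  also have "\<dots> = card (S \<inter> R) * (q-1)^(card S - 1)" by simp
  also have "\<dots> \<le> card S * (q-1)^(card S - 1)"
    by (rule mult_right_mono) (use card_mono[OF fS, of "S \<inter> R"] in auto)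
  finally show ?thesis .
qed


lemma T_props: assumes "s \<le> w" "w \<le> n" "max_s_intersecting n w s T"
  shows "finite T" "T \<noteq> {}" "s_intersecting n w s T"
proof -
  have "s_intersecting n w s {{1..w}}" using assms(1,2) by (auto simp: s_intersecting_def)
  then have "card {{1..w}} \<le> card T" using assms(3) by (auto simp: max_s_intersecting_def)
  then have c: "card T > 0" by simp
  show "finite T" using c card.infinite by fastforce
  show "T \<noteq> {}" using c by auto
  show "s_intersecting n w s T" using assms(3) by (simp add: max_s_intersecting_def)
qed

lemma card_Un_w: "card S1 = w \<Longrightarrow> card S2 = w \<Longrightarrow> finite S1 \<Longrightarrow> finite S2 \<Longrightarrow>
   card (S1 \<union> S2) + card (S1 \<inter> S2) = 2*w"
  using card_Un_Int[of S1 S2] by simp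

lemma Int_le_w: "card S1 = w \<Longrightarrow> finite S1 \<Longrightarrow> card (S1 \<inter> S2) \<le> w"
  by (rule le_trans[OF card_mono[of S1 "S1 \<inter> S2"]]) auto

lemma W_nonempty: "S \<subseteq> {1..n} \<Longrightarrow> 2 \<le> q \<Longrightarrow> W q n S \<noteq> {}"
proof
  assume S: "S \<subseteq> {1..n}" and q: "2 \<le> q" and e: "W q n S = {}"
  have "card (W q n S) = (q-1)^card S" using card_W[OF S] q by simp
  moreover have "(q-1)^card S > 0" using q by simp
  ultimately show False using e by simp
qed

lemma anticode_Aq: assumes "s_intersecting n w s T" "T \<noteq> {}" "2 \<le> q"
  shows "anticode q n w (2*w - s) (Aq q n T)"
proof -
  have sub: "Aq q n T \<subseteq> J q n w" using assms(1)
    unfolding Aq_def J_def wt_def s_intersecting_def by auto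
  obtain S where S: "S \<in> T" using assms(2) by blast
  then have "S \<subseteq> {1..n}" using assms(1) by (auto simp: s_intersecting_def)
  then have "W q n S \<noteq> {}" using W_nonempty assms(3) by blast
  then have ne: "Aq q n T \<noteq> {}" using S unfolding Aq_UN by blast
  have "\<forall>x\<in>Aq q n T. \<forall>y\<in>Aq q n T. hdist n x y \<le> 2*w - s"
  proof (intro ballI)
    fix x y assume x: "x \<in> Aq q n T" and y: "y \<in> Aq q n T"
    then have sx: "supp n x \<in> T" and sy: "supp n y \<in> T" by (auto simp: Aq_def)
    then have c: "card (supp n x) = w" "card (supp n y) = w" "s \<le> card (supp n x \<inter> supp n y)"
      using assms(1) by (auto simp: s_intersecting_def)
    have "card (supp n x \<union> supp n y) + card (supp n x \<inter> supp n y) = 2*w"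
      by (rule card_Un_w) (use c in auto)
    then show "hdist n x y \<le> 2*w - s" using hdist_le_union[of n x y] c by linarith
  qed
  then show ?thesis using sub ne by (simp add: anticode_def)
qed

lemma anticode_Aq2: assumes "s_intersecting n w s T" "T \<noteq> {}"
  shows "anticode 2 n w (2*w - 2*s) (Aq 2 n T)"
proof -
  have a: "anticode 2 n w (2*w - s) (Aq 2 n T)" using anticode_Aq[OF assms] by simp
  have "\<forall>x\<in>Aq 2 n T. \<forall>y\<in>Aq 2 n T. hdist n x y \<le> 2*w - 2*s"
  proof (intro ballI)
    fix x y assume x: "x \<in> Aq 2 n T" and y: "y \<in> Aq 2 n T"
    then have sx: "supp n x \<in> T" and sy: "supp n y \<in> T" and wx: "x \<in> words 2 n" and wy: "y \<in> words 2 n"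
      by (auto simp: Aq_def)
    then have c: "card (supp n x) = w" "card (supp n y) = w" "s \<le> card (supp n x \<inter> supp n y)"
      using assms(1) by (auto simp: s_intersecting_def)
    have "card (supp n x \<union> supp n y) + card (supp n x \<inter> supp n y) = 2*w"
      by (rule card_Un_w) (use c in auto)
    then show "hdist n x y \<le> 2*w - 2*s" using hdist_binary[OF wx wy] c by linarith
  qed
  then show ?thesis using a by (simp add: anticode_def)
qed

lemma part1: assumes "s \<le> w" "w \<le> n" "max_s_intersecting n w s T"
  shows "max_anticode 2 n w (2*w - 2*s) (Aq 2 n T)"
proof -
  note tp = T_props[OF assms]
  have "\<forall>B. anticode 2 n w (2*w - 2*s) B \<longrightarrow> card B \<le> card (Aq 2 n T)"
  proof (intro allI impI)
    fix B assume B: "anticode 2 n w (2*w - 2*s) B"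
    have Bw: "B \<subseteq> words 2 n" and BJ: "\<forall>x\<in>B. wt n x = w" using B by (auto simp: anticode_def J_def)
    have inj: "inj_on (supp n) B" using Bw binary_inj by (meson inj_onI subsetD)
    have "s_intersecting n w s (supp n ` B)"
      unfolding s_intersecting_def
    proof (intro conjI)
      show "\<forall>S\<in>supp n ` B. S \<subseteq> {1..n} \<and> card S = w" using BJ supp_sub by (auto simp: wt_def)
    next
      show "\<forall>S1\<in>supp n ` B. \<forall>S2\<in>supp n ` B. s \<le> card (S1 \<inter> S2)"
      proof (intro ballI)
      fix S1 S2 assume "S1 \<in> supp n ` B" "S2 \<in> supp n ` B"
      then obtain x y where x: "x \<in> B" and y: "y \<in> B" and e: "S1 = supp n x" "S2 = supp n y" by auto
      have d: "hdist n x y \<le> 2*w - 2*s" using B x y by (auto simp: anticode_def)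
      have c: "card (supp n x) = w" "card (supp n y) = w" using BJ x y by (auto simp: wt_def)
      have "card (supp n x \<union> supp n y) + card (supp n x \<inter> supp n y) = 2*w"
        by (rule card_Un_w) (use c in auto)
      moreover have "card (supp n x \<inter> supp n y) \<le> w" by (rule Int_le_w) (use c in auto)
      moreover have "hdist n x y = card (supp n x \<union> supp n y) - card (supp n x \<inter> supp n y)"
        by (rule hdist_binary) (use Bw x y in auto)
      ultimately have "s \<le> card (supp n x \<inter> supp n y)"
        using d assms(1) by linarith
      then show "s \<le> card (S1 \<inter> S2)" using e by simp
      qed
    qed
    then have "card (supp n ` B) \<le> card T" using assms(3) by (simp add: max_s_intersecting_def)
    moreover have "card (supp n ` B) = card B" using card_image[OF inj] .
    moreover have "card (Aq 2 n T) = card T" using card_Aq[OF tp(1) tp(3)] by simp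
    ultimately show "card B \<le> card (Aq 2 n T)" by simp
  qed
  then show ?thesis using anticode_Aq2[OF tp(3) tp(2)] by (simp add: max_anticode_def)
qed

lemma part2_bound: assumes "s \<le> w" "w \<le> n" "max_s_intersecting n w s T"
    and q: "card (WS n w) * w + 2 \<le> q" and B: "anticode q n w (2*w - s) B"
  shows "card B \<le> card (Aq q n T)"
proof -
  note tp = T_props[OF assms(1-3)]
  have q0: "0 < q" using q by simp
  have BJ: "B \<subseteq> J q n w" using B by (simp add: anticode_def)
  have Bw: "B \<subseteq> words q n" and Bwt: "\<forall>x\<in>B. card (supp n x) = w"
    using BJ by (auto simp: J_def wt_def)
  have Bd: "\<forall>x\<in>B. \<forall>y\<in>B. hdist n x y \<le> 2*w - s" using B by (simp add: anticode_def)
  have fB: "finite B" by (rule finite_subset[OF Bw finite_words])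
  define P where "P = supp n ` B"
  have fP: "finite P" using fB P_def by simp
  have PWS: "P \<subseteq> WS n w" using Bwt supp_sub unfolding P_def WS_def by auto
  define H where "H = {S\<in>P. \<forall>S'\<in>P. s \<le> card (S \<inter> S')}"
  define L where "L = P - H"
  define f where "f S = card {x\<in>B. supp n x = S}" for S
  have "B = (\<Union>S\<in>P. {x\<in>B. supp n x = S})" unfolding P_def by auto
  then have "card B \<le> (\<Sum>S\<in>P. f S)" unfolding f_def
    using card_UN_le[OF fP, of "\<lambda>S. {x\<in>B. supp n x = S}"] by simp
  also have "\<dots> = (\<Sum>S\<in>H. f S) + (\<Sum>S\<in>L. f S)"
    unfolding L_def using fP by (simp add: H_def sum.subset_diff[of "H" P] )
  finally have cB: "card B \<le> (\<Sum>S\<in>H. f S) + (\<Sum>S\<in>L. f S)" .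
  have fH: "\<forall>S\<in>H. f S \<le> (q-1)^w"
  proof
    fix S assume "S \<in> H"
    then have S: "S \<in> WS n w" using PWS H_def by auto
    have "f S \<le> card (W q n S)" unfolding f_def W_def
      by (rule card_mono) (use Bw in auto)
    also have "\<dots> = (q-1)^w" using card_W[of S n q] S q0 by (simp add: WS_def)
    finally show "f S \<le> (q-1)^w" .
  qed
  have fL: "\<forall>S\<in>L. f S \<le> w * (q-1)^(w-1)"
  proof
    fix S assume SL: "S \<in> L"
    then have S: "S \<in> WS n w" using PWS L_def by auto
    then have S1: "S \<subseteq> {1..n}" "card S = w" using WS_def by auto
    then have S1f: "finite S" using finite_subset[OF S1(1)] by simp
    obtain S' where S': "S' \<in> P" "card (S \<inter> S') < s" using SL unfolding L_def H_def by force
    obtain y where y: "y \<in> B" "supp n y = S'" using S'(1) P_def by auto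
    have "{x\<in>B. supp n x = S} \<subseteq> {x \<in> W q n S. \<exists>i\<in>S \<inter> supp n y. x i = y i}"
    proof
      fix x assume x: "x \<in> {x\<in>B. supp n x = S}"
      have "\<exists>i\<in>S \<inter> supp n y. x i = y i"
      proof (rule ccontr)
        assume "\<not> ?thesis"
        then have "hdist n x y = card (supp n x \<union> supp n y)"
          using x by (intro hdist_eq_union) auto
        moreover have "card (supp n x \<union> supp n y) + card (supp n x \<inter> supp n y) = 2*w"
          by (rule card_Un_w) (use Bwt x y in auto)
        moreover have "hdist n x y \<le> 2*w - s" using Bd x y by auto
        ultimately show False using S' x y assms(1) by auto
      qed
      then show "x \<in> {x \<in> W q n S. \<exists>i\<in>S \<inter> supp n y. x i = y i}"
        using x Bw unfolding W_def by auto
    qed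
    then have "f S \<le> card {x \<in> W q n S. \<exists>i\<in>S \<inter> supp n y. x i = y i}"
      unfolding f_def by (rule card_mono[rotated]) simp
    also have "\<dots> \<le> card S * (q-1)^(card S - 1)" by (rule card_agree[OF S1(1) q0])
    finally show "f S \<le> w * (q-1)^(w-1)" using S1 by simp
  qed
  have Hs: "s_intersecting n w s H"
    using PWS unfolding s_intersecting_def H_def WS_def by auto
  then have cH: "card H \<le> card T" using assms(3) by (simp add: max_s_intersecting_def)
  have sH: "(\<Sum>S\<in>H. f S) \<le> card H * (q-1)^w"
    using sum_mono[of H f "\<lambda>_. (q-1)^w"] fH by simp
  have sL: "(\<Sum>S\<in>L. f S) \<le> card L * (w * (q-1)^(w-1))"
    using sum_mono[of L f "\<lambda>_. w * (q-1)^(w-1)"] fL by simp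
  have cAq: "card (Aq q n T) = card T * (q-1)^w" using card_Aq[OF tp(1) tp(3) q0] .
  show ?thesis
  proof (cases "L = {}")
    case True
    then have "card B \<le> card H * (q-1)^w" using cB sH by simp
    also have "\<dots> \<le> card T * (q-1)^w" using cH by simp
    finally show ?thesis using cAq by simp
  next
    case False
    then obtain S0 where S0: "S0 \<in> L" by blast
    then obtain S' where S': "S' \<in> P" "card (S0 \<inter> S') < s" unfolding L_def H_def by force
    have w1: "1 \<le> w" using S' assms(1) by linarith
    have "S0 \<in> P" "S0 \<notin> H" using S0 L_def by auto
    have "s_intersecting n w s (insert S0 H)"
      unfolding s_intersecting_def
    proof (intro conjI)
      show "\<forall>S\<in>insert S0 H. S \<subseteq> {1..n} \<and> card S = w" using PWS \<open>S0 \<in> P\<close> H_def WS_def by auto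
    next
      show "\<forall>S1\<in>insert S0 H. \<forall>S2\<in>insert S0 H. s \<le> card (S1 \<inter> S2)"
      proof (intro ballI)
      fix S1 S2 assume a: "S1 \<in> insert S0 H" "S2 \<in> insert S0 H"
      have S0w: "card S0 = w" using PWS \<open>S0 \<in> P\<close> WS_def by auto
      show "s \<le> card (S1 \<inter> S2)"
      proof (cases "S1 = S0")
        case True
        show ?thesis
        proof (cases "S2 = S0")
          case True with \<open>S1 = S0\<close> S0w assms(1) show ?thesis by simp
        next
          case False
          then have "S2 \<in> H" using a by simp
          then have "s \<le> card (S2 \<inter> S0)" using \<open>S0 \<in> P\<close> H_def by auto
          then show ?thesis using True by (simp add: Int_commute)
        qed
      next
        case False
        then have "S1 \<in> H" using a by simp
        moreover have "S2 \<in> P" using a \<open>S0 \<in> P\<close> H_def by auto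
        ultimately show ?thesis using H_def by auto
      qed
      qed
    qed
    then have "card (insert S0 H) \<le> card T" using assms(3) by (simp add: max_s_intersecting_def)
    moreover have "finite H" using fP H_def by simp
    ultimately have cH1: "card H + 1 \<le> card T" using \<open>S0 \<notin> H\<close> by simp
    have cL: "card L \<le> card (WS n w)"
      by (rule card_mono) (use PWS L_def in auto)
    have "card L * (w * (q-1)^(w-1)) \<le> (card (WS n w) * w) * (q-1)^(w-1)"
      using cL by (simp add: mult.assoc)
    also have "\<dots> \<le> (q-1) * (q-1)^(w-1)"
      by (rule mult_right_mono) (use q in auto)
    also have "\<dots> = (q-1)^w" using w1 by (metis Suc_diff_le diff_Suc_1 power_Suc)
    finally have sL2: "(\<Sum>S\<in>L. f S) \<le> (q-1)^w" using sL by linarith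
    have "card B \<le> card H * (q-1)^w + (q-1)^w" using cB sH sL2 by linarith
    also have "\<dots> = (card H + 1) * (q-1)^w" by simp
    also have "\<dots> \<le> card T * (q-1)^w" using cH1 by (rule mult_right_mono) simp
    finally show ?thesis using cAq by simp
  qed
qed



lemma part3: assumes "s \<le> w" "w \<le> n" "max_s_intersecting n w s T"
  and q: "2 \<le> q" and C: "code q n w (2*w - s + 1) C"
  and eqC: "real (card C) = real (card (J q n w)) / real (card (Aq q n T))"
  shows "real (card (binarize n ` C)) = real (card (J 2 n w)) / real (card (Aq 2 n T))
           \<and> code 2 n w (2*w - 2*s + 2) (binarize n ` C)
           \<and> diameter_perfect 2 n w (2*w - 2*s + 2) (binarize n ` C)"
proof -
  note tp = T_props[OF assms(1-3)]
  have q0: "0 < q" using q by simp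
  have CJ: "C \<subseteq> J q n w" and c2: "2 \<le> card C"
    and Cd: "\<forall>x\<in>C. \<forall>y\<in>C. x \<noteq> y \<longrightarrow> 2*w - s + 1 \<le> hdist n x y"
    using C by (auto simp: code_def)
  have Cw: "\<forall>x\<in>C. card (supp n x) = w" using CJ by (auto simp: J_def wt_def)
  have small: "card (supp n x \<inter> supp n y) < s" if x: "x \<in> C" and y: "y \<in> C" and ne: "x \<noteq> y" for x y
  proof -
    have "card (supp n x \<union> supp n y) + card (supp n x \<inter> supp n y) = 2*w"
      by (rule card_Un_w) (use Cw x y in auto)
    moreover have "hdist n x y \<le> card (supp n x \<union> supp n y)" by (rule hdist_le_union)
    moreover have "2*w - s + 1 \<le> hdist n x y" using Cd x y ne by blast
    ultimately show ?thesis using assms(1) by linarith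
  qed
  have inj: "inj_on (binarize n) C"
  proof (rule inj_onI)
    fix x y assume x: "x \<in> C" and y: "y \<in> C" and e: "binarize n x = binarize n y"
    show "x = y"
    proof (rule ccontr)
      assume ne: "x \<noteq> y"
      have "supp n x = supp n y" using e supp_binarize by metis
      moreover have "card (supp n x) = w" using Cw x by blast
      ultimately have "card (supp n x \<inter> supp n y) = w" by simp
      then show False using small[OF x y ne] assms(1) by linarith
    qed
  qed
  have cC2: "card (binarize n ` C) = card C" by (rule card_image[OF inj])
  have pos: "(0::real) < real ((q-1)^w)" using q by simp
  have cT: "0 < card T" using tp(1,2) by (simp add: card_gt_0_iff)
  have eq1: "real (card (binarize n ` C)) = real (card (J 2 n w)) / real (card (Aq 2 n T))"
  proof -
    have "real (card (binarize n ` C)) = real (card (WS n w) * (q-1)^w) / real (card T * (q-1)^w)"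
      using eqC cC2 card_J[OF q0, of n w] card_Aq[OF tp(1) tp(3) q0] by simp
    also have "\<dots> = real (card (WS n w)) / real (card T)"
      using pos q by (simp add: field_simps)
    also have "\<dots> = real (card (J 2 n w)) / real (card (Aq 2 n T))"
      using card_J[of 2 n w] card_Aq[OF tp(1) tp(3), of 2] by simp
    finally show ?thesis .
  qed
  have code2: "code 2 n w (2*w - 2*s + 2) (binarize n ` C)"
    unfolding code_def
  proof (intro conjI)
    show "binarize n ` C \<subseteq> J 2 n w"
      using Cw binarize_words supp_binarize by (auto simp: J_def wt_def)
    show "2 \<le> card (binarize n ` C)" using cC2 c2 by simp
    show "\<forall>x\<in>binarize n ` C. \<forall>y\<in>binarize n ` C. x \<noteq> y \<longrightarrow> 2*w - 2*s + 2 \<le> hdist n x y"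
    proof (intro ballI impI)
      fix x' y' assume "x' \<in> binarize n ` C" "y' \<in> binarize n ` C" and ne': "x' \<noteq> y'"
      then obtain x y where x: "x \<in> C" and y: "y \<in> C" and ex: "x' = binarize n x" and ey: "y' = binarize n y"
        by blast
      have ne: "x \<noteq> y" using ne' ex ey by blast
      have h: "hdist n x' y' = card (supp n x \<union> supp n y) - card (supp n x \<inter> supp n y)"
        using hdist_binary[OF binarize_words[of n x] binarize_words[of n y]] ex ey
        by (simp add: supp_binarize)
      have "card (supp n x \<union> supp n y) + card (supp n x \<inter> supp n y) = 2*w"
        by (rule card_Un_w) (use Cw x y in auto)
      then show "2*w - 2*s + 2 \<le> hdist n x' y'" using h small[OF x y ne] assms(1) by linarith
    qed
  qed
  have "real (card (binarize n ` C) * card (Aq 2 n T)) = real (card (J 2 n w))"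
  proof -
    have "real (card (Aq 2 n T)) > 0" using card_Aq[OF tp(1) tp(3), of 2] cT by simp
    then show ?thesis using eq1 by (simp add: field_simps)
  qed
  then have "card (binarize n ` C) * card (Aq 2 n T) = card (J 2 n w)" by (simp only: of_nat_eq_iff)
  then have dp: "diameter_perfect 2 n w (2*w - 2*s + 2) (binarize n ` C)"
    unfolding diameter_perfect_def using code2 anticode_Aq2[OF tp(3) tp(2)]
    by (intro conjI exI[of _ "Aq 2 n T"] exI[of _ "2*w - 2*s"]) auto
  show ?thesis using eq1 code2 dp by blast
qed

theorem mainTheorem5:
  fixes n w s :: nat and T :: "nat set set"
  assumes "s \<le> w" and "w \<le> n"
    and "max_s_intersecting n w s T"
  shows "max_anticode 2 n w (2*w - 2*s) (Aq 2 n T)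
     \<and> (\<exists>Q. \<forall>q\<ge>Q. max_anticode q n w (2*w - s) (Aq q n T))
     \<and> (\<forall>q C. 2 \<le> q \<longrightarrow> code q n w (2*w - s + 1) C \<longrightarrow>
           real (card C) = real (card (J q n w)) / real (card (Aq q n T)) \<longrightarrow>
           real (card (binarize n ` C)) = real (card (J 2 n w)) / real (card (Aq 2 n T))
           \<and> code 2 n w (2*w - 2*s + 2) (binarize n ` C)
           \<and> diameter_perfect 2 n w (2*w - 2*s + 2) (binarize n ` C))"
proof (intro conjI)
  note tp = T_props[OF assms]
  show "max_anticode 2 n w (2*w - 2*s) (Aq 2 n T)" by (rule part1[OF assms])
  show "\<exists>Q. \<forall>q\<ge>Q. max_anticode q n w (2*w - s) (Aq q n T)"
  proof (intro exI allI impI)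
    fix q assume q: "card (WS n w) * w + 2 \<le> q"
    then have q2: "2 \<le> q" by simp
    show "max_anticode q n w (2*w - s) (Aq q n T)"
      unfolding max_anticode_def
      using anticode_Aq[OF tp(3) tp(2) q2] part2_bound[OF assms q] by blast
  qed
  show "\<forall>q C. 2 \<le> q \<longrightarrow> code q n w (2*w - s + 1) C \<longrightarrow>
           real (card C) = real (card (J q n w)) / real (card (Aq q n T)) \<longrightarrow>
           real (card (binarize n ` C)) = real (card (J 2 n w)) / real (card (Aq 2 n T))
           \<and> code 2 n w (2*w - 2*s + 2) (binarize n ` C)
           \<and> diameter_perfect 2 n w (2*w - 2*s + 2) (binarize n ` C)"
    using part3[OF assms] by blast
qed

end
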